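(* Let $n\ge1$, $L>0$, and let $\beta:\mathbb R\to\mathbb R$ be non-decreasing. Define, for $U$ in $$D(A)=\Big\{U\in L^\infty(0,L):\ \kappa_n(s)\frac{d^2U}{ds^2}\in L^\infty(0,L),\ \frac{dU}{ds}(L)=0,\ U(0)=0\Big\},$$ the operator $AU=\kappa_n(s)\,\beta\big(-\kappa_n(s)\frac{d^2U}{ds^2}\big)$. Then for all $U,V\in D(A)$ and $\lambda>0$, $$\big\|(U-V)_+\big\|_{L^\infty(0,L)}\le\big\|\big(U-V+\lambda(AU-AV)\big)_+\big\|_{L^\infty(0,L)}.$$
   Context: $\kappa_n(s)=n\omega_n^{1/n}s^{1/n'}$ with $n'=n/(n-1)$ and $\omega_n$ the volume of the unit ball of $\mathbb R^n$; $(\cdot)_+$ denotes the positive part. *)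

theory Defs
  imports "HOL-Analysis.Analysis" "HOL-Probability.Essential_Supremum"
begin

text \<open>kappa_n(s) = n omega_n^(1/n) s^(1/n'), with 1/n' = (n-1)/n and omega_n the
  volume of the unit ball of R^n (library: unit_ball_vol).\<close>
definition kappa :: "nat \<Rightarrow> real \<Rightarrow> real" where
  "kappa n s = real n * unit_ball_vol (real n) powr (1 / real n) * s powr ((real n - 1) / real n)"

text \<open>Membership of U in D(A), witnessed by its first derivative U1 and its
  (weak) second derivative U2:
  U continuous on [0,L] (so U is in L-infinity and the trace U(0) makes sense), U(0) = 0,
  U differentiable on (0,L] with derivative U1 (one-sided at L), U1(L) = 0,
  U1 absolutely continuous on every [s,L], s>0, with a.e. derivative U2
  (U1 t - U1 s = integral of U2 over [s,t]), and kappa_n U2 in L-infinity(0,L).\<close>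
definition domA :: "nat \<Rightarrow> real \<Rightarrow> (real \<Rightarrow> real) \<Rightarrow> (real \<Rightarrow> real) \<Rightarrow> (real \<Rightarrow> real) \<Rightarrow> bool" where
  "domA n L U U1 U2 \<longleftrightarrow>
     continuous_on {0..L} U \<and> U 0 = 0 \<and>
     (\<forall>s\<in>{0<..L}. (U has_real_derivative U1 s) (at s within {0..L})) \<and>
     U1 L = 0 \<and>
     (\<forall>s t. 0 < s \<longrightarrow> s \<le> t \<longrightarrow> t \<le> L \<longrightarrow> (U2 has_integral (U1 t - U1 s)) {s..t}) \<and>
     (\<exists>C. AE s in restrict_space lebesgue {0<..<L}. \<bar>kappa n s * U2 s\<bar> \<le> C)"

definition opA :: "nat \<Rightarrow> (real \<Rightarrow> real) \<Rightarrow> (real \<Rightarrow> real) \<Rightarrow> real \<Rightarrow> real" where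
  "opA n \<beta> U2 s = kappa n s * \<beta> (- kappa n s * U2 s)"

definition Linf_pos :: "real \<Rightarrow> (real \<Rightarrow> real) \<Rightarrow> ereal" where
  "Linf_pos L f = esssup (restrict_space lebesgue {0<..<L}) (\<lambda>s. ereal (max 0 (f s)))"

end

theory Submission
  imports Defs
begin

lemma int_pos:
  fixes f :: "real \<Rightarrow> real"
  assumes fi: "(f has_integral I) {s..t}" and st: "s < t"
    and ae: "AE x in lebesgue. x \<in> {s<..<t} \<longrightarrow> f x > 0"
  shows "I > 0"
proof -
  from ae obtain N where N: "{x \<in> space lebesgue. \<not>(x \<in> {s<..<t} \<longrightarrow> f x > 0)} \<subseteq> N"
    "emeasure lebesgue N = 0" "N \<in> sets lebesgue" by (rule AE_E)
  have negN: "negligible (N \<union> {s,t})"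
    using N by (simp add: negligible_iff_null_sets null_setsI)
  have "((\<lambda>x. max 0 (f x)) has_integral I) {s..t}"
  proof (rule has_integral_spike[OF negN _ fi])
    fix x assume "x \<in> {s..t} - (N \<union> {s,t})"
    then have "x \<in> {s<..<t}" "x \<notin> N" by auto
    moreover have "x \<in> space lebesgue" by simp
    ultimately have "f x > 0" using N(1) by blast
    then show "max 0 (f x) = f x" by simp
  qed
  define h where "h = (\<lambda>x. if x \<in> {s..t} then max 0 (f x) else (0::real))"
  have h: "(h has_integral I) UNIV"
    unfolding h_def by (rule iffD2[OF has_integral_restrict_UNIV]) fact
  have hnn: "\<And>x. 0 \<le> h x" unfolding h_def by simp
  have "h \<in> borel_measurable lebesgue \<and> integral\<^sup>N lebesgue h = ennreal I \<and> 0 \<le> I"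
    using iffD1[OF has_integral_iff_nn_integral_lebesgue[OF hnn] h] .
  then have m: "h \<in> borel_measurable lebesgue"
    and nn: "integral\<^sup>N lebesgue h = ennreal I"
    and I0: "0 \<le> I" by auto
  show ?thesis
  proof (rule ccontr)
    assume "\<not> I > 0"
    then have "I = 0" using I0 by linarith
    then have "integral\<^sup>N lebesgue (\<lambda>x. ennreal (h x)) = 0" using nn by simp
    moreover have "(\<lambda>x. ennreal (h x)) \<in> borel_measurable lebesgue" using m by measurable
    ultimately have "AE x in lebesgue. ennreal (h x) = 0"
      using nn_integral_0_iff_AE by blast
    with ae have "AE x in lebesgue. x \<notin> {s<..<t}"
    proof eventually_elim
      case (elim x)
      show ?case
      proof
        assume x: "x \<in> {s<..<t}"
        then have "h x = max 0 (f x)" unfolding h_def by simp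
        also have "\<dots> > 0" using elim x by simp
        finally show False using elim(2) by simp
      qed
    qed
    then have "emeasure lebesgue {s<..<t} = 0"
    proof -
      have "{x \<in> space lebesgue. \<not> x \<notin> {s<..<t}} = {s<..<t}" by auto
      from AE_iff_measurable[of "{s<..<t}" lebesgue "\<lambda>x. x \<notin> {s<..<t}", OF _ this]
      show ?thesis using \<open>AE x in lebesgue. x \<notin> {s<..<t}\<close> by simp
    qed
    then show False using st by simp
  qed
qed
lemma core:
  fixes W W1 W2 :: "real \<Rightarrow> real" and L c s0 :: real
  assumes L: "L > 0" and contW: "continuous_on {0..L} W"
    and dW: "\<forall>s\<in>{0<..L}. (W has_real_derivative W1 s) (at s within {0..L})"
    and W1L: "W1 L = 0"
    and iW: "\<forall>s t. 0 < s \<longrightarrow> s \<le> t \<longrightarrow> t \<le> L \<longrightarrow> (W2 has_integral (W1 t - W1 s)) {s..t}"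
    and s0: "s0 \<in> {0<..L}" and mx: "\<forall>x\<in>{0..L}. W x \<le> W s0" and c: "c < W s0"
    and ae: "AE x in lebesgue. x \<in> {0<..<L} \<longrightarrow> W x > c \<longrightarrow> W2 x > 0"
  shows False
proof -
  have dint: "(W has_real_derivative W1 x) (at x)" if "0 < x" "x < L" for x
  proof -
    have "x \<in> interior {0..L}" using that by simp
    then have "at x within {0..L} = at x" by (rule at_within_interior)
    then show ?thesis using dW that by (metis greaterThanAtMost_iff less_imp_le)
  qed
  obtain d where d: "d > 0" and dd: "\<forall>x\<in>{0..L}. dist x s0 < d \<longrightarrow> dist (W x) (W s0) < W s0 - c"
    using contW s0 c unfolding continuous_on_iff
    by (metis atLeastAtMost_iff greaterThanAtMost_iff less_imp_le diff_gt_0_iff_gt)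
  have Wc: "W x > c" if "x \<in> {0..L}" "\<bar>x - s0\<bar> < d" for x
    using dd that by (force simp: dist_real_def)
  have ipos: "W1 q - W1 p > 0" if "0 < p" "p < q" "q \<le> L" "s0 - d < p" "q < s0 + d" for p q
  proof (rule int_pos)
    show "(W2 has_integral (W1 q - W1 p)) {p..q}" using iW that by auto
    show "p < q" by fact
    show "AE x in lebesgue. x \<in> {p<..<q} \<longrightarrow> 0 < W2 x"
      using ae
    proof eventually_elim
      case (elim x)
      show ?case
      proof
        assume x: "x \<in> {p<..<q}"
        then have "W x > c" using Wc[of x] that by auto
        then show "0 < W2 x" using elim x that by auto
      qed
    qed
  qed
  show False
  proof (cases "s0 < L")
    case True
    define e where "e = min d (min s0 (L - s0)) / 2"
    have e: "e > 0" "e < d" "e < s0" "e < L - s0" using d s0 True by (auto simp: e_def)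
    have W1s0: "W1 s0 = 0"
    proof (rule DERIV_local_max[OF dint])
      show "0 < s0" "s0 < L" using s0 True by auto
      show "0 < min s0 (L - s0)" using s0 True by auto
      show "\<forall>y. \<bar>s0 - y\<bar> < min s0 (L - s0) \<longrightarrow> W y \<le> W s0"
        using mx by (auto simp: abs_less_iff)
    qed
    obtain l z where z: "s0 < z" "z < s0 + e" "DERIV W z :> l" "W (s0 + e) - W s0 = (s0 + e - s0) * l"
    proof -
      have "{s0..s0+e} \<subseteq> {0..L}" using e s0 by auto
      then have "continuous_on {s0..s0+e} W" using contW continuous_on_subset by blast
      moreover have "W differentiable (at x)" if "s0 < x" "x < s0 + e" for x
        using dint[of x] that e s0 by (auto simp: real_differentiable_def)
      ultimately show ?thesis using MVT[of s0 "s0 + e" W] e that by auto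
    qed
    have lz: "l = W1 z" using z e s0 by (intro DERIV_unique[OF z(3) dint]) auto
    moreover have "W1 z - W1 s0 > 0" using ipos[of s0 z] z e s0 by auto
    ultimately have "e * W1 z > 0" using e W1s0 by simp
    then have "W (s0 + e) > W s0" using z lz by simp
    moreover have "s0 + e \<in> {0..L}" using e s0 by auto
    ultimately show False using mx by force
  next
    case False
    then have sL: "s0 = L" using s0 by auto
    define e where "e = min d L / 2"
    have e: "e > 0" "e < d" "e < L" using d L by (auto simp: e_def)
    obtain l z where z: "L - e < z" "z < L" "DERIV W z :> l" "W L - W (L - e) = (L - (L - e)) * l"
    proof -
      have "{L-e..L} \<subseteq> {0..L}" using e by auto
      then have "continuous_on {L-e..L} W" using contW continuous_on_subset by blast
      moreover have "W differentiable (at x)" if "L - e < x" "x < L" for x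
        using dint[of x] that e by (auto simp: real_differentiable_def)
      ultimately show ?thesis using MVT[of "L - e" L W] e that by auto
    qed
    have lz: "l = W1 z" using z e by (intro DERIV_unique[OF z(3) dint]) auto
    moreover have "W1 L - W1 z > 0" using ipos[of z L] z e sL by auto
    ultimately have "e * W1 z < 0" using e W1L by (simp add: mult_pos_neg)
    then have "W (L - e) > W L" using z lz by simp
    moreover have "L - e \<in> {0..L}" using e by auto
    ultimately have "W (L - e) \<le> W s0" "W L < W (L - e)" using mx by blast+
    then show False using sL by simp
  qed
qed

theorem lemma2:
  fixes n :: nat and L lam :: real and \<beta> :: "real \<Rightarrow> real"
    and U U1 U2 V V1 V2 :: "real \<Rightarrow> real"
  assumes "n \<ge> 1" and "L > 0" and "mono \<beta>"
    and "domA n L U U1 U2" and "domA n L V V1 V2"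
    and "lam > 0"
  shows "Linf_pos L (\<lambda>s. U s - V s)
           \<le> Linf_pos L (\<lambda>s. U s - V s + lam * (opA n \<beta> U2 s - opA n \<beta> V2 s))"
proof -
  note L = assms(2)
  have U: "continuous_on {0..L} U" "U 0 = 0"
    "\<forall>s\<in>{0<..L}. (U has_real_derivative U1 s) (at s within {0..L})" "U1 L = 0"
    "\<forall>s t. 0 < s \<longrightarrow> s \<le> t \<longrightarrow> t \<le> L \<longrightarrow> (U2 has_integral (U1 t - U1 s)) {s..t}"
    using assms(4) unfolding domA_def by blast+
  have V: "continuous_on {0..L} V" "V 0 = 0"
    "\<forall>s\<in>{0<..L}. (V has_real_derivative V1 s) (at s within {0..L})" "V1 L = 0"
    "\<forall>s t. 0 < s \<longrightarrow> s \<le> t \<longrightarrow> t \<le> L \<longrightarrow> (V2 has_integral (V1 t - V1 s)) {s..t}"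
    using assms(5) unfolding domA_def by blast+
  define W where "W = (\<lambda>s. U s - V s)"
  define W1 where "W1 = (\<lambda>s. U1 s - V1 s)"
  define W2 where "W2 = (\<lambda>s. U2 s - V2 s)"
  define D where "D = (\<lambda>s. opA n \<beta> U2 s - opA n \<beta> V2 s)"
  have contW: "continuous_on {0..L} W" unfolding W_def using U(1) V(1) by (intro continuous_on_diff)
  have W0: "W 0 = 0" unfolding W_def using U(2) V(2) by simp
  have dW: "\<forall>s\<in>{0<..L}. (W has_real_derivative W1 s) (at s within {0..L})"
  proof
    fix s assume "s \<in> {0<..L}"
    then have "(U has_real_derivative U1 s) (at s within {0..L})" "(V has_real_derivative V1 s) (at s within {0..L})"
      using U(3) V(3) by blast+
    from DERIV_diff[OF this] show "(W has_real_derivative W1 s) (at s within {0..L})"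
      unfolding W_def W1_def .
  qed
  have W1L: "W1 L = 0" unfolding W1_def using U(4) V(4) by simp
  have iW: "\<forall>s t. 0 < s \<longrightarrow> s \<le> t \<longrightarrow> t \<le> L \<longrightarrow> (W2 has_integral (W1 t - W1 s)) {s..t}"
  proof (intro allI impI)
    fix s t :: real assume st: "0 < s" "s \<le> t" "t \<le> L"
    then have "(U2 has_integral (U1 t - U1 s)) {s..t}" "(V2 has_integral (V1 t - V1 s)) {s..t}"
      using U(5) V(5) by blast+
    from has_integral_diff[OF this] show "(W2 has_integral (W1 t - W1 s)) {s..t}"
      unfolding W1_def W2_def by (simp add: algebra_simps)
  qed
  have kpos: "kappa n s > 0" if "s > 0" for s
  proof -
    have "real n > 0" using assms(1) by simp
    moreover have "unit_ball_vol (real n) > 0" by simp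
    moreover have "unit_ball_vol (real n) powr (1 / real n) > 0"
    proof -
      have "unit_ball_vol (real n) > 0" by (rule unit_ball_vol_pos) simp
      then have "unit_ball_vol (real n) \<noteq> 0" by linarith
      then show ?thesis by simp
    qed
    moreover have "s powr ((real n - 1) / real n) > 0" using that by simp
    ultimately show ?thesis unfolding kappa_def by (simp add: mult_pos_pos)
  qed
  have sign: "W2 s > 0" if "s > 0" "D s < 0" for s
  proof -
    define k where "k = kappa n s"
    have k: "k > 0" using kpos that unfolding k_def by simp
    have "D s = k * (\<beta> (- k * U2 s) - \<beta> (- k * V2 s))"
      unfolding D_def opA_def k_def by (simp add: algebra_simps)
    then have "k * (\<beta> (- k * U2 s) - \<beta> (- k * V2 s)) < 0" using that(2) by simp
    then have b: "\<beta> (- k * U2 s) < \<beta> (- k * V2 s)" using k by (simp add: mult_less_0_iff)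
    have "- k * U2 s < - k * V2 s"
    proof (rule ccontr)
      assume "\<not> - k * U2 s < - k * V2 s"
      then have "- k * V2 s \<le> - k * U2 s" by linarith
      then have "\<beta> (- k * V2 s) \<le> \<beta> (- k * U2 s)" by (rule monoD[OF assms(3)])
      then show False using b by linarith
    qed
    then have "U2 s > V2 s" using k by simp
    then show ?thesis unfolding W2_def by simp
  qed
  define F where "F = (\<lambda>s. ereal (max 0 (W s + lam * D s)))"
  define R where "R = esssup (restrict_space lebesgue {0<..<L}) F"
  have RHS: "Linf_pos L (\<lambda>s. U s - V s + lam * (opA n \<beta> U2 s - opA n \<beta> V2 s)) = R"
    unfolding R_def F_def Linf_pos_def W_def D_def ..
  have LHS: "Linf_pos L (\<lambda>s. U s - V s) = esssup (restrict_space lebesgue {0<..<L}) (\<lambda>s. ereal (max 0 (W s)))"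
    unfolding Linf_pos_def W_def ..
  have aeR: "AE x in lebesgue. x \<in> {0<..<L} \<longrightarrow> F x \<le> R"
  proof -
    have sl: "{0<..<L} \<inter> space lebesgue \<in> sets lebesgue" by simp
    have "AE x in restrict_space lebesgue {0<..<L}. F x \<le> R"
      unfolding R_def by (rule esssup_AE)
    then show ?thesis by (rule iffD1[OF AE_restrict_space_iff[OF sl]])
  qed
  obtain s0 where s0: "s0 \<in> {0..L}" and mx: "\<forall>y\<in>{0..L}. W y \<le> W s0"
    using continuous_attains_sup[OF compact_Icc _ contW] L by auto
  have meas: "(\<lambda>s. ereal (max 0 (W s))) \<in> borel_measurable (restrict_space lebesgue {0<..<L})"
  proof -
    have "continuous_on {0<..<L} (\<lambda>s. max 0 (W s))"
      by (intro continuous_on_max continuous_on_const continuous_on_subset[OF contW]) auto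
    then have "(\<lambda>s. max 0 (W s)) \<in> borel_measurable (restrict_space lebesgue {0<..<L})"
      by (intro continuous_imp_measurable_on_sets_lebesgue) auto
    then show ?thesis by (rule borel_measurable_ereal)
  qed
  have le1: "esssup (restrict_space lebesgue {0<..<L}) (\<lambda>s. ereal (max 0 (W s))) \<le> ereal (max 0 (W s0))"
  proof (rule esssup_I[OF meas])
    show "AE x in restrict_space lebesgue {0<..<L}. ereal (max 0 (W x)) \<le> ereal (max 0 (W s0))"
    proof (rule AE_I2)
      fix x assume "x \<in> space (restrict_space lebesgue {0<..<L})"
      then have "x \<in> {0..L}" by (simp add: space_restrict_space)
      then have "W x \<le> W s0" using mx by blast
      then have "max 0 (W x) \<le> max 0 (W s0)" by simp
      then show "ereal (max 0 (W x)) \<le> ereal (max 0 (W s0))" by (simp only: ereal_less_eq)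
    qed
  qed
  have nomeas: False if "AE x in lebesgue. x \<notin> {0<..<L}"
  proof -
    have "{x \<in> space lebesgue. \<not> x \<notin> {0<..<L}} = {0<..<L}" by auto
    from AE_iff_measurable[of "{0<..<L}" lebesgue "\<lambda>x. x \<notin> {0<..<L}", OF _ this]
    have "emeasure lebesgue {0<..<L} = 0" using that by simp
    then show False using L by simp
  qed
  have R0: "ereal 0 \<le> R"
  proof (rule ccontr)
    assume "\<not> ereal 0 \<le> R"
    then have R': "R < ereal 0" by simp
    have "AE x in lebesgue. x \<notin> {0<..<L}"
      using aeR
    proof eventually_elim
      case (elim x)
      show ?case
      proof
        assume "x \<in> {0<..<L}"
        then have "F x \<le> R" using elim by blast
        moreover have "F x \<ge> ereal 0" unfolding F_def by simp
        ultimately show False using R' by simp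
      qed
    qed
    then show False by (rule nomeas)
  qed
  have R1: "ereal (W s0) \<le> R" if pos: "W s0 > 0"
  proof (rule ccontr)
    assume "\<not> ereal (W s0) \<le> R"
    then have "R < ereal (W s0)" by simp
    then obtain c where c1: "R < ereal c" and c2: "ereal c < ereal (W s0)"
      using ereal_dense2 by blast
    have ae: "AE x in lebesgue. x \<in> {0<..<L} \<longrightarrow> W x > c \<longrightarrow> W2 x > 0"
      using aeR
    proof eventually_elim
      case (elim x)
      show ?case
      proof (intro impI)
        assume x: "x \<in> {0<..<L}" and Wx: "W x > c"
        then have "F x < ereal c" using elim c1 by (meson order_le_less_trans)
        then have "W x + lam * D x < c" unfolding F_def by simp
        then have "lam * D x < 0" using Wx by simp
        then have "D x < 0" using assms(6) by (simp add: mult_less_0_iff)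
        then show "W2 x > 0" using sign x by simp
      qed
    qed
    have "s0 \<noteq> 0" using W0 pos by auto
    then have "s0 \<in> {0<..L}" using s0 by auto
    moreover have "c < W s0" using c2 by simp
    ultimately show False using core[OF L contW dW W1L iW _ mx _ ae] by blast
  qed
  have "ereal (max 0 (W s0)) \<le> R"
    using R0 R1 by (cases "W s0 > 0") (auto simp: max_def)
  with le1 have "esssup (restrict_space lebesgue {0<..<L}) (\<lambda>s. ereal (max 0 (W s))) \<le> R"
    by (rule order_trans)
  then show ?thesis unfolding LHS RHS .
qed

end
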